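(* Let $x=(x_1,\dots,x_n)\in B^n$ and suppose that its expansion under the multiplicative Selmer algorithm $S$ eventually becomes periodic, i.e. there are $m\geq 0$, $p\geq 1$ with $S^{m+p}x=S^mx$. Then \begin{equation*} \lim_{s\to\infty}\left(\frac{B_1^{(s)}}{B_0^{(s)}},\dots,\frac{B_n^{(s)}}{B_0^{(s)}}\right)=x. \end{equation*} Thus the periodic multiplicative algorithm of Selmer is weakly convergent and even uniformly weakly convergent, i.e. for every column index $g$, $0\leq g\leq n$, the ratios $\left(\frac{B^{(s)}_{1g}}{B^{(s)}_{0g}},\dots,\frac{B^{(s)}_{ng}}{B^{(s)}_{0g}}\right)$ of the entries of $\beta^{(s)}$ converge to $x$ as $s\to\infty$.
   Context: Let $B^n:=\{(x_1,\dots,x_n):\,1\geq x_1\geq\dots\geq x_n\geq 0\}$. The multiplicative Selmer algorithm (MSA) is the map $S\colon B^n\to B^n$, \begin{equation*} S(x_1,\dots,x_n)=\left(\frac{x_2}{x_1},\dots,\frac{x_n}{x_1},\frac{1-kx_n}{x_1}\right),\qquad k=k(x):=\left[x_n^{-1}\right], \end{equation*} with digit set $\mathbb{N}$ and cells $B(k)=\{x\in B^n:\frac{1}{k+1}<x_n\leq\frac1k\}$. The digits of $x$ are $k_i=k(S^{i-1}x)$, $i\geq 1$. To the digit $k$ one associates the $(n+1)\times(n+1)$-matrix $\beta(k)$ whose first row is $(0,\dots,0,k,1)$ (entry $k$ in the second-to-last column, entry $1$ in the last column), whose entries directly below the main diagonal are $1$, and whose other entries are $0$; it satisfies $\det\beta(k)=\pm1$.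 For $s\geq 1$ put $\beta^{(s)}(k_1,\dots,k_s):=\beta(k_1)\cdots\beta(k_s)=((B^{(s)}_{ij}))_{0\leq i,j\leq n}$, with $\beta^{(0)}$ the identity matrix. Its columns are written as \begin{equation*} \beta^{(s)}=\begin{pmatrix} B_0^{(s-n+1)} & \dots & B_0^{(s-1)} & B_0^{(s)} & B_0^{(s-n)} \\ \vdots & & & & \vdots\\ B_n^{(s-n+1)} & \dots & B_n^{(s-1)} & B_n^{(s)} & B_n^{(s-n)} \end{pmatrix}, \end{equation*} so $B_i^{(s)}$ is the entry in row $i$ and second-to-last column of $\beta^{(s)}$, and $B_i^{(s+1)}=k_{s+1}B_i^{(s-n+1)}+B_i^{(s-n)}$ for $i=0,\dots,n$. If $y=S^sx$ then $x_i=\frac{B_i^{(s-n+1)}+y_1B_i^{(s-n+2)}+\dots+y_{n-1}B_i^{(s)}+y_nB_i^{(s-n)}}{B_0^{(s-n+1)}+y_1B_0^{(s-n+2)}+\dots+y_{n-1}B_0^{(s)}+y_nB_0^{(s-n)}}$, $1\leq i\leq n$. *)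

theory Defs
  imports Complex_Main "Jordan_Normal_Form.Matrix"
begin

text \<open>Points of B^n are represented as functions x :: nat => real, where only the
coordinates x 1, ..., x n matter.\<close>

definition inB :: "nat \<Rightarrow> (nat \<Rightarrow> real) \<Rightarrow> bool" where
  "inB n x \<longleftrightarrow> x 1 \<le> 1 \<and> (\<forall>i\<in>{1..<n}. x (Suc i) \<le> x i) \<and> 0 \<le> x n"

definition selmer_digit :: "nat \<Rightarrow> (nat \<Rightarrow> real) \<Rightarrow> nat" where
  "selmer_digit n x = nat \<lfloor>1 / x n\<rfloor>"

definition selmer :: "nat \<Rightarrow> (nat \<Rightarrow> real) \<Rightarrow> (nat \<Rightarrow> real)" where
  "selmer n x = (\<lambda>i. if 1 \<le> i \<and> i < n then x (Suc i) / x 1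
                      else if i = n then (1 - real (selmer_digit n x) * x n) / x 1
                      else 0)"

definition beta :: "nat \<Rightarrow> nat \<Rightarrow> real mat" where
  "beta n k = mat (Suc n) (Suc n) (\<lambda>(i, j).
      if i = 0 then (if j = n - 1 then real k else 0) + (if j = n then 1 else 0)
      else if j + 1 = i then 1 else 0)"

fun betas :: "nat \<Rightarrow> (nat \<Rightarrow> real) \<Rightarrow> nat \<Rightarrow> real mat" where
  "betas n x 0 = 1\<^sub>m (Suc n)"
| "betas n x (Suc s) = betas n x s * beta n (selmer_digit n ((selmer n ^^ s) x))"

end

theory Submission
  imports Defs
begin


lemma beta_carrier[simp]: "beta n k \<in> carrier_mat (Suc n) (Suc n)"
  unfolding beta_def by simp

lemma betas_carrier[simp]: "betas n z s \<in> carrier_mat (Suc n) (Suc n)"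
  by (induction s) auto

lemma betas_dims[simp]: "dim_row (betas n z s) = Suc n" "dim_col (betas n z s) = Suc n"
  by (metis betas_carrier carrier_matD(1), metis betas_carrier carrier_matD(2))

lemma betas_add: "betas n z (a + b) = betas n z a * betas n ((selmer n ^^ a) z) b"
proof (induction b)
  case 0 then show ?case by simp
next
  case (Suc b)
  have e: "(selmer n ^^ (a + b)) z = (selmer n ^^ b) ((selmer n ^^ a) z)"
    by (metis funpow_add add.commute comp_apply)
  have "betas n z (a + Suc b) = betas n z (a+b) * beta n (selmer_digit n ((selmer n ^^ (a+b)) z))"
    by simp
  also have "\<dots> = betas n z a * (betas n ((selmer n ^^ a) z) b * beta n (selmer_digit n ((selmer n ^^ b) ((selmer n ^^ a) z))))"
    unfolding Suc e by (rule assoc_mult_mat[of _ "Suc n" "Suc n" _ "Suc n" _ "Suc n"]) auto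
  finally show ?case by simp
qed

lemma mult_entry:
  assumes "A \<in> carrier_mat (Suc n) (Suc n)" "B \<in> carrier_mat (Suc n) (Suc n)" "i \<le> n" "j \<le> n"
  shows "(A * B) $$ (i,j) = (\<Sum>l\<le>n. A $$ (i,l) * B $$ (l,j))"
  using assms by (auto simp: scalar_prod_def lessThan_Suc_atMost atLeast0LessThan intro!: sum.cong)

lemma beta_entry: "i \<le> n \<Longrightarrow> j \<le> n \<Longrightarrow> beta n k $$ (i,j) =
   (if i = 0 then (if j = n - 1 then real k else 0) + (if j = n then 1 else 0)
      else if j + 1 = i then 1 else 0)"
  unfolding beta_def by simp



lemma inB_le:
  assumes "inB n z" "1 \<le> i" "i \<le> n"
  shows "z n \<le> z i \<and> z i \<le> 1"
proof
  have dec: "\<And>i. 1 \<le> i \<Longrightarrow> i < n \<Longrightarrow> z (Suc i) \<le> z i" using assms(1) unfolding inB_def by auto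
  have "\<forall>d. d + i \<le> n \<longrightarrow> z (d + i) \<le> z i"
  proof
    fix d show "d + i \<le> n \<longrightarrow> z (d + i) \<le> z i"
    proof (induction d)
      case (Suc d)
      show ?case
      proof
        assume a: "Suc d + i \<le> n"
        have "z (Suc (d + i)) \<le> z (d + i)" using dec[of "d+i"] a assms(2) by simp
        then show "z (Suc d + i) \<le> z i" using Suc a by simp
      qed
    qed simp
  qed
  then have "n - i + i \<le> n \<longrightarrow> z (n - i + i) \<le> z i" by blast
  then show "z n \<le> z i" using assms(3) by simp
  have "\<forall>i. 1 \<le> i \<longrightarrow> i \<le> n \<longrightarrow> z i \<le> z 1"
  proof
    fix i show "1 \<le> i \<longrightarrow> i \<le> n \<longrightarrow> z i \<le> z 1"
    proof (induction i)
      case (Suc i)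
      show ?case
      proof (intro impI)
        assume a: "1 \<le> Suc i" "Suc i \<le> n"
        show "z (Suc i) \<le> z 1"
        proof (cases "i = 0")
          case False
          then have "z (Suc i) \<le> z i" using dec[of i] a by simp
          moreover have "z i \<le> z 1" using Suc a False by simp
          ultimately show ?thesis by linarith
        qed simp
      qed
    qed simp
  qed
  then show "z i \<le> 1" using assms unfolding inB_def by (meson order_trans)
qed

lemma digit_props:
  assumes "0 < z n" "z n \<le> 1"
  shows "1 \<le> real (selmer_digit n z)" "real (selmer_digit n z) \<le> 1 / z n"
        "1 / z n < real (selmer_digit n z) + 1"
proof -
  have g: "1 \<le> 1 / z n" using assms by simp
  then have "1 \<le> \<lfloor>1 / z n\<rfloor>" by linarith
  then have f1: "1 \<le> \<lfloor>1 / z n\<rfloor>" .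
  then have f: "0 \<le> \<lfloor>1 / z n\<rfloor>" by linarith
  then have r: "real (selmer_digit n z) = \<lfloor>1 / z n\<rfloor>" unfolding selmer_digit_def by simp
  show "1 \<le> real (selmer_digit n z)" unfolding r using f1 by simp
  show "real (selmer_digit n z) \<le> 1 / z n" unfolding r by linarith
  show "1 / z n < real (selmer_digit n z) + 1" unfolding r by linarith
qed

lemma selmer_inB:
  assumes "1 \<le> n" "inB n z" "0 < z n" "0 < selmer n z n"
  shows "inB n (selmer n z)"
proof -
  have zn1: "z n \<le> z 1" "z 1 \<le> 1" using inB_le[OF assms(2), of 1] assms(1) by auto
  have z1: "0 < z 1" using zn1 assms(3) by linarith
  have zn: "z n \<le> 1" using zn1 by linarith
  let ?k = "real (selmer_digit n z)"
  have kk: "1 / z n < ?k + 1" using digit_props(3)[of z n] assms(3) zn by auto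
  then have kk2: "1 < (?k + 1) * z n" using assms(3) by (simp add: field_simps)
  have dec: "\<And>i. 1 \<le> i \<Longrightarrow> i < n \<Longrightarrow> z (Suc i) \<le> z i" using assms(2) unfolding inB_def by auto
  have A: "selmer n z 1 \<le> 1"
  proof (cases "n = 1")
    case True
    then have "selmer n z 1 = (1 - ?k * z n) / z 1" unfolding selmer_def by simp
    also have "\<dots> \<le> 1" using kk2 z1 True by (simp add: field_simps)
    finally show ?thesis .
  next
    case False
    then have "selmer n z 1 = z (Suc 1) / z 1" using assms(1) unfolding selmer_def by simp
    also have "\<dots> \<le> 1" using dec[of 1] False assms(1) z1 by (simp add: field_simps)
    finally show ?thesis .
  qed
  have B: "\<forall>i\<in>{1..<n}. selmer n z (Suc i) \<le> selmer n z i"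
  proof
    fix i assume i: "i \<in> {1..<n}"
    show "selmer n z (Suc i) \<le> selmer n z i"
    proof (cases "Suc i = n")
      case True
      then have "selmer n z (Suc i) = (1 - ?k * z n) / z 1" "selmer n z i = z n / z 1"
        using i unfolding selmer_def by auto
      moreover have "1 - ?k * z n \<le> z n" using kk2 by (simp add: algebra_simps)
      ultimately show ?thesis using z1 by (simp add: divide_right_mono)
    next
      case False
      then have "selmer n z (Suc i) = z (Suc (Suc i)) / z 1" "selmer n z i = z (Suc i) / z 1"
        using i unfolding selmer_def by auto
      then show ?thesis using dec[of "Suc i"] i False z1 by (simp add: divide_right_mono)
    qed
  qed
  show ?thesis unfolding inB_def using A B less_imp_le[OF assms(4)] by blast
qed

lemma iter_inB:
  assumes "1 \<le> n" "inB n x" "\<forall>j. 0 < (selmer n ^^ j) x n"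
  shows "inB n ((selmer n ^^ s) x)"
proof (induction s)
  case (Suc s)
  have "0 < (selmer n ^^ Suc s) x n" using assms(3) by blast
  then have "0 < selmer n ((selmer n ^^ s) x) n" by simp
  note p1 = this
  have p0: "0 < (selmer n ^^ s) x n" using assms(3) by blast
  have "inB n (selmer n ((selmer n ^^ s) x))" using selmer_inB[OF assms(1) Suc p0 p1] .
  then show ?case by simp
qed (use assms in simp)

definition agree :: "nat \<Rightarrow> (nat \<Rightarrow> real) \<Rightarrow> (nat \<Rightarrow> real) \<Rightarrow> bool" where
  "agree n z z' \<longleftrightarrow> (\<forall>i\<in>{1..n}. z i = z' i)"

lemma selmer_agree: "1 \<le> n \<Longrightarrow> agree n z z' \<Longrightarrow> selmer n z = selmer n z'"
  unfolding agree_def selmer_def selmer_digit_def by (auto intro!: ext)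

lemma digit_agree: "1 \<le> n \<Longrightarrow> agree n z z' \<Longrightarrow> selmer_digit n z = selmer_digit n z'"
  unfolding agree_def selmer_digit_def by auto

lemma iter_agree: "1 \<le> n \<Longrightarrow> agree n z z' \<Longrightarrow> agree n ((selmer n ^^ s) z) ((selmer n ^^ s) z')"
proof (induction s)
  case (Suc s)
  then have "selmer n ((selmer n ^^ s) z) = selmer n ((selmer n ^^ s) z')" using selmer_agree by blast
  then show ?case by (simp add: agree_def)
qed simp

lemma betas_agree: "1 \<le> n \<Longrightarrow> agree n z z' \<Longrightarrow> betas n z s = betas n z' s"
proof (induction s)
  case (Suc s)
  then show ?case using digit_agree[OF Suc(2) iter_agree[OF Suc(2,3), of s]] by simp
qed simp

lemma agree_trans: "agree n a b \<Longrightarrow> agree n b c \<Longrightarrow> agree n a c"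
  unfolding agree_def by auto

lemma agree_sym: "agree n a b \<Longrightarrow> agree n b a"
  unfolding agree_def by auto

definition vv :: "(nat \<Rightarrow> real) \<Rightarrow> nat \<Rightarrow> real" where
  "vv z j = (if j = 0 then 1 else z j)"

lemma vv_agree: "agree n z z' \<Longrightarrow> j \<le> n \<Longrightarrow> vv z j = vv z' j"
  unfolding agree_def vv_def by auto

lemma beta_row_sum:
  assumes "1 \<le> n" "i \<le> n"
  shows "(\<Sum>j\<le>n. beta n k $$ (i,j) * w j) = (if i = 0 then real k * w (n - 1) + w n else w (i - 1))"
proof (cases "i = 0")
  case True
  have h1: "(\<Sum>j\<le>n. beta n k $$ (i,j) * w j) = (\<Sum>j\<le>n. (if j = n - 1 then real k * w j else 0) + (if j = n then w j else 0))"
    using True by (intro sum.cong) (auto simp: beta_entry algebra_simps)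
  have nn: "n - 1 \<noteq> n" using assms(1) by simp
  have h2: "(\<Sum>j\<le>n. (if j = n - 1 then real k * w j else 0) + (if j = n then w j else 0)) = real k * w (n - 1) + w n"
    using nn by (simp add: sum.distrib)
  show ?thesis using True h1 h2 by simp
next
  case False
  have "(\<Sum>j\<le>n. beta n k $$ (i,j) * w j) = (\<Sum>j\<le>n. if j = i - 1 then w j else 0)"
    using False assms by (intro sum.cong) (auto simp: beta_entry)
  also have "\<dots> = w (i - 1)" using assms by simp
  finally show ?thesis using False by simp
qed



lemma beta_nonneg: "i \<le> n \<Longrightarrow> j \<le> n \<Longrightarrow> 0 \<le> beta n k $$ (i,j)"
  by (simp add: beta_entry)

lemma betas_Suc_entry: "i \<le> n \<Longrightarrow> j \<le> n \<Longrightarrow> betas n z (Suc s) $$ (i,j) =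
   (\<Sum>l\<le>n. betas n z s $$ (i,l) * beta n (selmer_digit n ((selmer n ^^ s) z)) $$ (l,j))"
  by (simp add: mult_entry)

lemma betas_nonneg: "i \<le> n \<Longrightarrow> j \<le> n \<Longrightarrow> 0 \<le> betas n z s $$ (i,j)"
proof (induction s arbitrary: i j)
  case 0 then show ?case by simp
next
  case (Suc s)
  then show ?case unfolding betas_Suc_entry[OF Suc(2,3)]
    by (intro sum_nonneg mult_nonneg_nonneg) (auto simp: beta_nonneg)
qed

lemma betas_col_pos: "j \<le> n \<Longrightarrow> \<exists>i\<le>n. 0 < betas n z s $$ (i,j)"
proof (induction s arbitrary: j)
  case 0 then show ?case by (intro exI[of _ j]) simp
next
  case (Suc s)
  let ?k = "selmer_digit n ((selmer n ^^ s) z)"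
  obtain l where l: "l \<le> n" "0 < beta n ?k $$ (l,j)"
  proof (cases "j < n")
    case True
    then show ?thesis using that[of "Suc j"] by (simp add: beta_entry)
  next
    case False
    then have "j = n" using Suc by simp
    then show ?thesis using that[of 0] by (simp add: beta_entry)
  qed
  obtain i where i: "i \<le> n" "0 < betas n z s $$ (i,l)" using Suc.IH[OF l(1)] by blast
  have "0 < betas n z (Suc s) $$ (i,j)" unfolding betas_Suc_entry[OF i(1) Suc(2)]
    by (rule sum_pos2[of _ l]) (use l i Suc(2) in \<open>auto intro!: mult_nonneg_nonneg betas_nonneg beta_nonneg\<close>)
  then show ?case using i by blast
qed

lemma step_vv:
  assumes "1 \<le> n" "inB n z" "0 < z n" "i \<le> n"
  shows "vv z i = z 1 * (\<Sum>j\<le>n. beta n (selmer_digit n z) $$ (i,j) * vv (selmer n z) j)"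
proof -
  have zn1: "z n \<le> z 1" "z 1 \<le> 1" using inB_le[OF assms(2), of 1] assms(1) by auto
  have z1: "0 < z 1" using zn1 assms(3) by linarith
  let ?k = "real (selmer_digit n z)"
  show ?thesis
  proof (cases "i = 0")
    case True
    have sn: "selmer n z n = (1 - ?k * z n) / z 1" unfolding selmer_def using assms(1) by simp
    have "vv (selmer n z) (n - 1) = (if n = 1 then 1 else z n / z 1)"
      unfolding vv_def selmer_def using assms(1) by auto
    then have "z 1 * (?k * vv (selmer n z) (n - 1) + vv (selmer n z) n) = 1"
      using sn z1 assms(1) by (auto simp: vv_def field_simps)
    then show ?thesis using True beta_row_sum[OF assms(1) assms(4)] by (simp add: vv_def)
  next
    case False
    have "z 1 * vv (selmer n z) (i - 1) = z i"
    proof (cases "i = 1")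
      case True then show ?thesis by (simp add: vv_def)
    next
      case False
      then show ?thesis using \<open>i \<noteq> 0\<close> assms(4) z1 unfolding vv_def selmer_def by auto
    qed
    then show ?thesis using False beta_row_sum[OF assms(1) assms(4)] by (simp add: vv_def)
  qed
qed

lemma eigen:
  assumes "1 \<le> n" "inB n x" "\<forall>j. 0 < (selmer n ^^ j) x n"
  shows "\<exists>c>0. \<forall>i\<le>n. vv x i = c * (\<Sum>j\<le>n. betas n x s $$ (i,j) * vv ((selmer n ^^ s) x) j)"
proof (induction s)
  case 0
  have "\<forall>i\<le>n. vv x i = 1 * (\<Sum>j\<le>n. betas n x 0 $$ (i,j) * vv ((selmer n ^^ 0) x) j)"
  proof (intro allI impI)
    fix i assume i: "i \<le> n"
    have "(\<Sum>j\<le>n. betas n x 0 $$ (i,j) * vv x j) = (\<Sum>j\<le>n. if j = i then vv x j else 0)"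
      using i by (intro sum.cong) auto
    then show "vv x i = 1 * (\<Sum>j\<le>n. betas n x 0 $$ (i,j) * vv ((selmer n ^^ 0) x) j)" using i by simp
  qed
  then show ?case by (intro exI[of _ 1]) simp
next
  case (Suc s)
  obtain c where c: "c > 0" "\<forall>i\<le>n. vv x i = c * (\<Sum>j\<le>n. betas n x s $$ (i,j) * vv ((selmer n ^^ s) x) j)"
    using Suc by blast
  define y where "y = (selmer n ^^ s) x"
  have yB: "inB n y" unfolding y_def by (rule iter_inB[OF assms])
  have yn: "0 < y n" unfolding y_def using assms(3) by blast
  have y1: "0 < y 1" using inB_le[OF yB, of 1] assms(1) yn by linarith
  let ?b = "beta n (selmer_digit n y)"
  have "\<forall>i\<le>n. vv x i = (c * y 1) * (\<Sum>j\<le>n. betas n x (Suc s) $$ (i,j) * vv (selmer n y) j)"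
  proof (intro allI impI)
    fix i assume i: "i \<le> n"
    have "vv x i = c * (\<Sum>j\<le>n. betas n x s $$ (i,j) * (y 1 * (\<Sum>l\<le>n. ?b $$ (j,l) * vv (selmer n y) l)))"
      using c(2) i step_vv[OF assms(1) yB yn] unfolding y_def by auto
    also have "\<dots> = (c * y 1) * (\<Sum>j\<le>n. \<Sum>l\<le>n. betas n x s $$ (i,j) * ?b $$ (j,l) * vv (selmer n y) l)"
      by (simp add: sum_distrib_left algebra_simps)
    also have "\<dots> = (c * y 1) * (\<Sum>l\<le>n. \<Sum>j\<le>n. betas n x s $$ (i,j) * ?b $$ (j,l) * vv (selmer n y) l)"
      by (subst sum.swap) simp
    also have "\<dots> = (c * y 1) * (\<Sum>l\<le>n. (\<Sum>j\<le>n. betas n x s $$ (i,j) * ?b $$ (j,l)) * vv (selmer n y) l)"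
      by (simp add: sum_distrib_right)
    also have "\<dots> = (c * y 1) * (\<Sum>l\<le>n. betas n x (Suc s) $$ (i,l) * vv (selmer n y) l)"
    proof -
      have e: "\<And>l. l \<le> n \<Longrightarrow> (\<Sum>j\<le>n. betas n x s $$ (i,j) * ?b $$ (j,l)) = betas n x (Suc s) $$ (i,l)"
        unfolding y_def by (rule betas_Suc_entry[OF i, symmetric])
      show ?thesis by (intro arg_cong2[where f="(*)"] refl sum.cong) (use e in auto)
    qed
    finally show "vv x i = (c * y 1) * (\<Sum>j\<le>n. betas n x (Suc s) $$ (i,j) * vv (selmer n y) j)" .
  qed
  moreover have ss: "(selmer n ^^ Suc s) x = selmer n y" by (simp add: y_def)
  ultimately show ?case using mult_pos_pos[OF c(1) y1] unfolding ss by blast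
qed



fun reach :: "nat \<Rightarrow> nat \<Rightarrow> nat \<Rightarrow> nat \<Rightarrow> bool" where
  "reach n 0 i j = (i = j)"
| "reach n (Suc L) i j = ((j < n \<and> reach n L i (Suc j)) \<or> ((j = n - 1 \<or> j = n) \<and> reach n L i 0))"

lemma reach_trans: "reach n a i l \<Longrightarrow> reach n b l j \<Longrightarrow> reach n (a + b) i j"
  by (induction b arbitrary: j) auto

lemma reach_down: "j + d \<le> n \<Longrightarrow> reach n d (j + d) j"
proof (induction d arbitrary: j)
  case (Suc d)
  have "reach n d (Suc j + d) (Suc j)" using Suc.IH[of "Suc j"] Suc(2) by simp
  then have "reach n d (Suc (j + d)) (Suc j)" by simp
  then show ?case using Suc(2) by simp
qed simp

lemma reach_0_j: "j \<le> n \<Longrightarrow> reach n (Suc (n - j)) 0 j"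
proof -
  assume j: "j \<le> n"
  have "reach n 1 0 n" by simp
  moreover have "reach n (n - j) n j" using reach_down[of j "n - j" n] j by simp
  ultimately show ?thesis using reach_trans by fastforce
qed

lemma reach_cyc1: "1 \<le> n \<Longrightarrow> reach n n 0 0"
proof -
  assume n: "1 \<le> n"
  have "reach n 1 0 (n - 1)" by simp
  moreover have "reach n (n - 1) (n - 1) 0" using reach_down[of 0 "n - 1" n] by simp
  ultimately have "reach n (1 + (n - 1)) 0 0" by (rule reach_trans)
  then show ?thesis using n by simp
qed

lemma reach_cyc: "1 \<le> n \<Longrightarrow> reach n (a * n + b * Suc n) 0 0"
proof (induction a)
  case 0
  show ?case
  proof (induction b)
    case (Suc b)
    have "reach n (Suc n) 0 0" using reach_0_j[of 0 n] by simp
    then have r: "reach n (0 * n + b * Suc n + Suc n) 0 0" by (rule reach_trans[OF Suc])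
    have e: "0 * n + Suc b * Suc n = 0 * n + b * Suc n + Suc n" by simp
    show ?case by (subst e) (rule r)
  qed simp
next
  case (Suc a)
  then have r: "reach n (n + (a * n + b * Suc n)) 0 0" using reach_trans[OF reach_cyc1] by blast
  have e: "Suc a * n + b * Suc n = n + (a * n + b * Suc n)" by simp
  show ?case by (subst e) (rule r)
qed

lemma reach_big0: "1 \<le> n \<Longrightarrow> n * n \<le> N \<Longrightarrow> reach n N 0 0"
proof -
  assume n: "1 \<le> n" and N: "n * n \<le> N"
  define q where "q = N div n"
  define r where "r = N mod n"
  have Nqr: "N = q * n + r" unfolding q_def r_def by simp
  have rn: "r < n" unfolding r_def using n by simp
  have "n \<le> q"
  proof (rule ccontr)
    assume "\<not> n \<le> q"
    then have "q + 1 \<le> n" by simp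
    then have "(q + 1) * n \<le> n * n" by (rule mult_le_mono1)
    then show False using N Nqr rn by (simp add: algebra_simps)
  qed
  then have "N = (q - r) * n + r * Suc n" using Nqr rn by (simp add: algebra_simps diff_mult_distrib)
  then show ?thesis using reach_cyc[OF n] by metis
qed

lemma reach_all:
  assumes "1 \<le> n" "i \<le> n" "j \<le> n" "n * n + 2 * n + 1 \<le> L"
  shows "reach n L i j"
proof -
  define N where "N = L - i - Suc (n - j)"
  have N: "n * n \<le> N" unfolding N_def using assms by simp
  have "reach n i i 0" using reach_down[of 0 i n] assms by simp
  then have "reach n (i + N) i 0" using reach_trans reach_big0[OF assms(1) N] by blast
  then have "reach n (i + N + Suc (n - j)) i j" using reach_trans reach_0_j[OF assms(3)] by blast
  moreover have "i + N + Suc (n - j) = L" unfolding N_def using assms by simp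
  ultimately show ?thesis by (simp only:)
qed

lemma reach_pos:
  assumes "1 \<le> n" "\<forall>s. 1 \<le> selmer_digit n ((selmer n ^^ s) z)"
  shows "reach n L i j \<Longrightarrow> i \<le> n \<Longrightarrow> j \<le> n \<Longrightarrow> 0 < betas n z L $$ (i,j)"
proof (induction L arbitrary: j)
  case 0 then show ?case by simp
next
  case (Suc L)
  let ?k = "selmer_digit n ((selmer n ^^ L) z)"
  have k1: "1 \<le> ?k" using assms(2) by blast
  obtain l where l: "l \<le> n" "0 < beta n ?k $$ (l,j)" "0 < betas n z L $$ (i,l)"
  proof (cases "j < n \<and> reach n L i (Suc j)")
    case True
    then show ?thesis using that[of "Suc j"] Suc by (simp add: beta_entry)
  next
    case False
    have "(j < n \<and> reach n L i (Suc j)) \<or> ((j = n - 1 \<or> j = n) \<and> reach n L i 0)"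
      using Suc(2) by simp
    then have r0: "(j = n - 1 \<or> j = n) \<and> reach n L i 0" using False by blast
    have "0 < beta n ?k $$ (0,j)" using r0 k1 Suc(4) by (auto simp: beta_entry)
    then show ?thesis using that[of 0] Suc r0 by simp
  qed
  have "0 < betas n z (Suc L) $$ (i,j)" unfolding betas_Suc_entry[OF Suc(3,4)]
    by (rule sum_pos2[of _ l]) (use l Suc(3,4) in \<open>auto intro!: mult_nonneg_nonneg betas_nonneg beta_nonneg\<close>)
  then show ?case .
qed



definition mv :: "nat \<Rightarrow> (nat \<Rightarrow> nat \<Rightarrow> real) \<Rightarrow> (nat \<Rightarrow> real) \<Rightarrow> nat \<Rightarrow> real" where
  "mv n P u = (\<lambda>i. \<Sum>j\<le>n. P i j * u j)"

definition good :: "nat \<Rightarrow> (nat \<Rightarrow> real) \<Rightarrow> (nat \<Rightarrow> real) \<Rightarrow> real \<Rightarrow> real \<Rightarrow> bool" where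
  "good n w u a b \<longleftrightarrow> 0 < a \<and> a \<le> b \<and> (\<forall>j\<le>n. a * w j \<le> u j \<and> u j \<le> b * w j)"

lemma lam_ge_c:
  fixes n :: nat and w :: "nat \<Rightarrow> real"
  assumes wpos: "\<forall>j\<le>n. 0 < w j" and cpos: "0 < c" and cP: "\<forall>i\<le>n. \<forall>j\<le>n. c \<le> P i j"
    and eig: "\<forall>i\<le>n. (\<Sum>j\<le>n. P i j * w j) = lam * w i"
  shows "c \<le> lam"
proof -
  have "c * w 0 \<le> P 0 0 * w 0" using cP wpos by (intro mult_right_mono) auto
  also have "\<dots> \<le> (\<Sum>j\<le>n. P 0 j * w j)"
  proof (rule member_le_sum[of 0 "{..n}" "\<lambda>j. P 0 j * w j"])
    fix j assume j: "j \<in> {..n} - {0}"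
    have "0 \<le> P 0 j" using cP cpos j by (meson atMost_iff Diff_iff less_imp_le order_trans le0)
    then show "0 \<le> P 0 j * w j" using wpos j by (simp add: less_imp_le)
  qed simp_all
  also have "\<dots> = lam * w 0" using eig by simp
  finally show ?thesis using wpos by (simp add: mult_le_cancel_right)
qed

lemma contract_step:
  assumes wpos: "\<forall>j\<le>n. 0 < w j" and cpos: "0 < c" and cP: "\<forall>i\<le>n. \<forall>j\<le>n. c \<le> P i j"
    and eig: "\<forall>i\<le>n. (\<Sum>j\<le>n. P i j * w j) = lam * w i"
    and g: "good n w u a b"
  shows "\<exists>a' b'. good n w (mv n P u) a' b' \<and> (b' - a') / a' \<le> (1 - c / lam) * ((b - a) / a)"
proof -
  have cl: "c \<le> lam" by (rule lam_ge_c[OF wpos cpos cP eig])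
  have lpos: "0 < lam" using cl cpos by linarith
  have a0: "0 < a" and ab: "a \<le> b" and ub: "\<And>j. j \<le> n \<Longrightarrow> a * w j \<le> u j \<and> u j \<le> b * w j"
    using g unfolding good_def by auto
  define W where "W = (\<Sum>j\<le>n. w j)"
  define E where "E = (\<Sum>j\<le>n. u j - a * w j)"
  define F where "F = (\<Sum>j\<le>n. b * w j - u j)"
  have wi: "\<And>i. i \<le> n \<Longrightarrow> w i \<le> W" unfolding W_def
    by (rule member_le_sum) (use wpos in \<open>auto intro: less_imp_le\<close>)
  have Wpos: "0 < W" using wi[of 0] wpos by force
  have E0: "0 \<le> E" unfolding E_def by (rule sum_nonneg) (use ub in \<open>auto\<close>)
  have F0: "0 \<le> F" unfolding F_def by (rule sum_nonneg) (use ub in \<open>auto\<close>)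
  have EF: "E + F = (b - a) * W" unfolding E_def F_def W_def
    by (simp add: sum.distrib[symmetric] sum_distrib_left algebra_simps)
  define a' where "a' = lam * a + c * E / W"
  define b' where "b' = lam * b - c * F / W"
  have lo: "a' * w i \<le> mv n P u i" if i: "i \<le> n" for i
  proof -
    have "mv n P u i = a * (\<Sum>j\<le>n. P i j * w j) + (\<Sum>j\<le>n. P i j * (u j - a * w j))"
      unfolding mv_def by (simp add: sum_distrib_left sum.distrib[symmetric] algebra_simps)
    also have "\<dots> = a * lam * w i + (\<Sum>j\<le>n. P i j * (u j - a * w j))" using eig i by simp
    finally have e: "mv n P u i = a * lam * w i + (\<Sum>j\<le>n. P i j * (u j - a * w j))" .
    have "c * E = (\<Sum>j\<le>n. c * (u j - a * w j))" unfolding E_def by (simp add: sum_distrib_left)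
    also have "\<dots> \<le> (\<Sum>j\<le>n. P i j * (u j - a * w j))"
      by (rule sum_mono) (use cP i ub in \<open>auto intro!: mult_right_mono\<close>)
    finally have s1: "c * E \<le> (\<Sum>j\<le>n. P i j * (u j - a * w j))" .
    have "c * E / W * w i \<le> c * E"
    proof -
      have "c * E * w i \<le> c * E * W" using wi[OF i] cpos E0 by (intro mult_left_mono) auto
      then show ?thesis using Wpos by (simp add: field_simps)
    qed
    then show ?thesis unfolding a'_def e using s1 by (simp add: algebra_simps)
  qed
  have hi: "mv n P u i \<le> b' * w i" if i: "i \<le> n" for i
  proof -
    have "mv n P u i = b * (\<Sum>j\<le>n. P i j * w j) - (\<Sum>j\<le>n. P i j * (b * w j - u j))"
      unfolding mv_def by (simp add: sum_distrib_left sum_subtractf[symmetric] algebra_simps)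
    also have "\<dots> = b * lam * w i - (\<Sum>j\<le>n. P i j * (b * w j - u j))" using eig i by simp
    finally have e: "mv n P u i = b * lam * w i - (\<Sum>j\<le>n. P i j * (b * w j - u j))" .
    have "c * F = (\<Sum>j\<le>n. c * (b * w j - u j))" unfolding F_def by (simp add: sum_distrib_left)
    also have "\<dots> \<le> (\<Sum>j\<le>n. P i j * (b * w j - u j))"
      by (rule sum_mono) (use cP i ub in \<open>auto intro!: mult_right_mono\<close>)
    finally have s1: "c * F \<le> (\<Sum>j\<le>n. P i j * (b * w j - u j))" .
    have "c * F / W * w i \<le> c * F"
    proof -
      have "c * F * w i \<le> c * F * W" using wi[OF i] cpos F0 by (intro mult_left_mono) auto
      then show ?thesis using Wpos by (simp add: field_simps)
    qed
    then show ?thesis unfolding b'_def e using s1 by (simp add: algebra_simps)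
  qed
  have diff: "b' - a' = (lam - c) * (b - a)"
  proof -
    have d1: "b' - a' = lam * (b - a) - c * (E + F) / W" unfolding a'_def b'_def using Wpos by (simp add: field_simps)
    have d2: "c * (E + F) / W = c * (b - a)" using EF Wpos by simp
    show ?thesis using d1 d2 by (simp add: algebra_simps)
  qed
  have a'ge: "lam * a \<le> a'" unfolding a'_def using cpos E0 Wpos by simp
  have a'pos: "0 < a'" using a'ge lpos a0 by (meson mult_pos_pos order_less_le_trans)
  have "0 \<le> (lam - c) * (b - a)" using cl ab by simp
  then have "a' \<le> b'" using diff by linarith
  then have gd: "good n w (mv n P u) a' b'" unfolding good_def
    using a'pos diff cl ab lo hi by (auto intro!: mult_nonneg_nonneg)
  have "(b' - a') / a' \<le> (lam - c) * (b - a) / (lam * a)"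
    unfolding diff by (rule divide_left_mono) (use cl ab a'ge lpos a0 a'pos in auto)
  also have "\<dots> = (1 - c / lam) * ((b - a) / a)" using lpos a0 by (simp add: field_simps)
  finally show ?thesis using gd by blast
qed

lemma contract_iter:
  assumes wpos: "\<forall>j\<le>n. 0 < w j" and cpos: "0 < c" and cP: "\<forall>i\<le>n. \<forall>j\<le>n. c \<le> P i j"
    and eig: "\<forall>i\<le>n. (\<Sum>j\<le>n. P i j * w j) = lam * w i"
    and g: "good n w u a b"
  shows "\<exists>a' b'. good n w ((mv n P ^^ t) u) a' b' \<and> (b' - a') / a' \<le> (1 - c / lam) ^ t * ((b - a) / a)"
proof (induction t)
  case 0 then show ?case using g by auto
next
  case (Suc t)
  then obtain a1 b1 where g1: "good n w ((mv n P ^^ t) u) a1 b1"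
    and r1: "(b1 - a1) / a1 \<le> (1 - c / lam) ^ t * ((b - a) / a)" by blast
  obtain a2 b2 where g2: "good n w (mv n P ((mv n P ^^ t) u)) a2 b2"
    and r2: "(b2 - a2) / a2 \<le> (1 - c / lam) * ((b1 - a1) / a1)"
    using contract_step[OF wpos cpos cP eig g1] by blast
  have cl: "c \<le> lam" by (rule lam_ge_c[OF wpos cpos cP eig])
  have th: "0 \<le> 1 - c / lam" using cl cpos by simp
  have "(b2 - a2) / a2 \<le> (1 - c / lam) * ((1 - c / lam) ^ t * ((b - a) / a))"
    using r2 mult_left_mono[OF r1 th] by linarith
  also have "\<dots> = (1 - c / lam) ^ Suc t * ((b - a) / a)" by simp
  finally have r3: "(b2 - a2) / a2 \<le> (1 - c / lam) ^ Suc t * ((b - a) / a)" .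
  have g2': "good n w ((mv n P ^^ Suc t) u) a2 b2" using g2 by simp
  show ?case using g2' r3 by blast
qed

lemma contract_init:
  assumes wb: "\<forall>j\<le>n. wl \<le> w j \<and> w j \<le> 1" and wl: "0 < wl"
    and cpos: "0 < c" and cP: "\<forall>i\<le>n. \<forall>j\<le>n. c \<le> P i j \<and> P i j \<le> C"
    and v0: "\<forall>j\<le>n. 0 \<le> v j" and vs: "0 < (\<Sum>j\<le>n. v j)"
  shows "\<exists>a b. good n w (mv n P v) a b \<and> (b - a) / a \<le> C / (c * wl)"
proof -
  define V where "V = (\<Sum>j\<le>n. v j)"
  have V: "0 < V" using vs V_def by simp
  have lo: "c * V \<le> mv n P v i" if i: "i \<le> n" for i
    unfolding mv_def V_def sum_distrib_left
    by (rule sum_mono) (use cP i v0 in \<open>auto intro!: mult_right_mono\<close>)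
  have hi: "mv n P v i \<le> C * V" if i: "i \<le> n" for i
    unfolding mv_def V_def sum_distrib_left
    by (rule sum_mono) (use cP i v0 in \<open>auto intro!: mult_right_mono\<close>)
  have cC: "c \<le> C" using cP by (meson order_trans le0)
  have Cpos: "0 < C" using cC cpos by linarith
  have wl1: "wl \<le> 1" using wb by (meson order_trans le0)
  have "C * V \<le> C * V / wl" using wl wl1 Cpos V by (simp add: field_simps)
  then have ab: "c * V \<le> C * V / wl" using mult_right_mono[OF cC, of V] V by linarith
  have g: "good n w (mv n P v) (c * V) (C * V / wl)" unfolding good_def
  proof (intro conjI allI impI)
    show "0 < c * V" using cpos V by simp
    show "c * V \<le> C * V / wl" by (rule ab)
  next
    fix j assume j: "j \<le> n"
    have "c * V * w j \<le> c * V" using wb j cpos V by (simp add: mult_left_le)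
    then show "c * V * w j \<le> mv n P v j" using lo[OF j] by linarith
    have "C * V \<le> C * V / wl * w j"
    proof -
      have "C * V * wl \<le> C * V * w j" using wb j Cpos V by (intro mult_left_mono) auto
      then show ?thesis using wl by (simp add: field_simps)
    qed
    then show "mv n P v j \<le> C * V / wl * w j" using hi[OF j] by linarith
  qed
  have "(C * V / wl - c * V) / (c * V) \<le> (C * V / wl) / (c * V)"
    using cpos V wl Cpos by (intro divide_right_mono) auto
  also have "\<dots> = C / (c * wl)" using V by (simp add: field_simps)
  finally show ?thesis using g by blast
qed

lemma contract_final:
  assumes A0: "\<forall>i\<le>n. \<forall>j\<le>n. 0 \<le> A i j"
    and eig: "\<forall>i\<le>n. z i = mu * (\<Sum>j\<le>n. A i j * w j)" and mu: "0 < mu"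
    and z0: "z 0 = 1" and g: "good n w u a b" and i: "i \<le> n" and zi: "0 < z i" "z i \<le> 1"
  shows "\<bar>mv n A u i / mv n A u 0 - z i\<bar> \<le> (b - a) / a"
proof -
  have a0: "0 < a" and ab: "a \<le> b" and ub: "\<And>j. j \<le> n \<Longrightarrow> a * w j \<le> u j \<and> u j \<le> b * w j"
    using g unfolding good_def by auto
  have bnd: "a * z k / mu \<le> mv n A u k \<and> mv n A u k \<le> b * z k / mu" if k: "k \<le> n" for k
  proof
    have zk: "z k = mu * (\<Sum>j\<le>n. A k j * w j)" using eig k by blast
    have "a * z k / mu = a * (\<Sum>j\<le>n. A k j * w j)" using zk mu by simp
    also have "\<dots> = (\<Sum>j\<le>n. A k j * (a * w j))" by (simp add: sum_distrib_left algebra_simps)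
    also have "\<dots> \<le> mv n A u k" unfolding mv_def
      by (rule sum_mono) (use A0 k ub in \<open>auto intro!: mult_left_mono\<close>)
    finally show "a * z k / mu \<le> mv n A u k" .
    have zk: "z k = mu * (\<Sum>j\<le>n. A k j * w j)" using eig k by blast
    have "mv n A u k \<le> (\<Sum>j\<le>n. A k j * (b * w j))" unfolding mv_def
      by (rule sum_mono) (use A0 k ub in \<open>auto intro!: mult_left_mono\<close>)
    also have "\<dots> = b * (\<Sum>j\<le>n. A k j * w j)" by (simp add: sum_distrib_left algebra_simps)
    also have "\<dots> = b * z k / mu" using zk mu by simp
    finally show "mv n A u k \<le> b * z k / mu" .
  qed
  note bi = bnd[OF i] and b0 = bnd[of 0]
  have "0 < a * z 0 / mu" using a0 mu z0 by simp
  then have f0pos: "0 < mv n A u 0" using b0 by fastforce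
  have "0 \<le> a * z i / mu" using a0 zi mu by simp
  then have fi0: "0 \<le> mv n A u i" using bi by linarith
  have up: "mv n A u i / mv n A u 0 \<le> (b * z i / mu) / (a * z 0 / mu)"
    by (rule frac_le) (use bi b0 zi a0 ab mu z0 fi0 in auto)
  have dn: "(a * z i / mu) / (b * z 0 / mu) \<le> mv n A u i / mv n A u 0"
    by (rule frac_le) (use bi b0 zi a0 ab mu z0 f0pos fi0 in auto)
  have up': "(b * z i / mu) / (a * z 0 / mu) = z i + z i * ((b - a) / a)" using z0 mu a0 by (simp add: field_simps)
  have dn': "(a * z i / mu) / (b * z 0 / mu) = z i - z i * ((b - a) / b)" using z0 mu a0 ab by (simp add: field_simps)
  have q: "0 \<le> (b - a) / a" using a0 ab by simp
  have q2: "(b - a) / b \<le> (b - a) / a" using a0 ab by (intro divide_left_mono) auto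
  have m1: "z i * ((b - a) / a) \<le> (b - a) / a" using zi q by (intro mult_left_le_one_le) auto
  have "0 \<le> (b - a) / b" using a0 ab by simp
  then have "z i * ((b - a) / b) \<le> (b - a) / b" using zi by (intro mult_left_le_one_le) auto
  then have m2: "z i * ((b - a) / b) \<le> (b - a) / a" using q2 by linarith
  have g1: "mv n A u i / mv n A u 0 \<le> z i + z i * ((b - a) / a)" using up unfolding up' .
  have g2: "z i - z i * ((b - a) / b) \<le> mv n A u i / mv n A u 0" using dn unfolding dn' .
  show ?thesis unfolding abs_le_iff using g1 g2 m1 m2 by linarith
qed



lemma finite_bounds:
  fixes f :: "nat \<Rightarrow> nat \<Rightarrow> real"
  assumes "\<forall>i\<le>n. \<forall>j\<le>n. 0 < f i j"
  shows "\<exists>c>0. \<exists>C. \<forall>i\<le>n. \<forall>j\<le>n. c \<le> f i j \<and> f i j \<le> C"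
proof -
  let ?S = "(\<lambda>(i,j). f i j) ` ({..n} \<times> {..n})"
  have fin: "finite ?S" by simp
  have ne: "?S \<noteq> {}" by auto
  have "Min ?S \<in> ?S" using Min_in[OF fin ne] .
  then have mpos: "0 < Min ?S" using assms by auto
  have "\<forall>i\<le>n. \<forall>j\<le>n. Min ?S \<le> f i j \<and> f i j \<le> Max ?S"
  proof (intro allI impI)
    fix i j assume "i \<le> n" "j \<le> n"
    then have "f i j \<in> ?S" by force
    then show "Min ?S \<le> f i j \<and> f i j \<le> Max ?S" using fin by simp
  qed
  then show ?thesis using mpos by blast
qed

lemma mv_cong: "(\<And>j. j \<le> n \<Longrightarrow> u j = u' j) \<Longrightarrow> mv n P u k = mv n P u' k"
  unfolding mv_def by (intro sum.cong refl) simp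

lemma agree_per:
  assumes n1: "1 \<le> n" and ag: "agree n ((selmer n ^^ p) y) y"
  shows "agree n ((selmer n ^^ (t * p)) y) y"
proof (induction t)
  case 0 then show ?case by (simp add: agree_def)
next
  case (Suc t)
  have e: "(selmer n ^^ (Suc t * p)) y = (selmer n ^^ p) ((selmer n ^^ (t * p)) y)"
    by (simp add: funpow_add)
  have "agree n ((selmer n ^^ p) ((selmer n ^^ (t * p)) y)) ((selmer n ^^ p) y)"
    by (rule iter_agree[OF n1 Suc])
  then show ?case unfolding e using ag agree_trans by blast
qed

theorem mainTheorem5:
  fixes n m p :: nat and x :: "nat \<Rightarrow> real"
  assumes "1 \<le> n"
    and "inB n x"
    and "\<forall>j. 0 < (selmer n ^^ j) x n"
    and "1 \<le> p"
    and "\<forall>i\<in>{1..n}. (selmer n ^^ (m + p)) x i = (selmer n ^^ m) x i"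
  shows "(\<forall>i\<in>{1..n}.
           (\<lambda>s. betas n x s $$ (i, n - 1) / betas n x s $$ (0, n - 1)) \<longlonglongrightarrow> x i)
       \<and> (\<forall>g\<le>n. \<forall>i\<in>{1..n}.
           (\<lambda>s. betas n x s $$ (i, g) / betas n x s $$ (0, g)) \<longlonglongrightarrow> x i)"
proof -
  note n1 = assms(1) and xB = assms(2) and xpos = assms(3) and p1 = assms(4) and per = assms(5)
  define y where "y = (selmer n ^^ m) x"
  have Sy: "(selmer n ^^ s) y = (selmer n ^^ (s + m)) x" for s
    unfolding y_def by (simp add: funpow_add)
  have yB: "inB n ((selmer n ^^ s) y)" for s unfolding Sy by (rule iter_inB[OF n1 xB xpos])
  have ypos: "\<forall>j. 0 < (selmer n ^^ j) y n" unfolding Sy using xpos by blast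
  have yB0: "inB n y" using yB[of 0] by simp
  have yn: "0 < y n" using ypos[rule_format, of 0] by simp
  have dig1: "\<forall>s. 1 \<le> selmer_digit n ((selmer n ^^ s) y)"
  proof
    fix s
    let ?z = "(selmer n ^^ s) y"
    have "?z n \<le> 1" using inB_le[OF yB[of s], of n] n1 by simp
    then have "1 \<le> real (selmer_digit n ?z)" using digit_props(1)[of ?z n] ypos by blast
    then show "1 \<le> selmer_digit n ?z" by simp
  qed
  define L0 where "L0 = n * n + 2 * n + 1"
  define L where "L = p * L0"
  have LL0: "L0 \<le> L" unfolding L_def using p1 by simp
  have L1: "1 \<le> L" using LL0 unfolding L0_def by simp
  have Spy: "(selmer n ^^ p) y = (selmer n ^^ (m + p)) x" using Sy[of p] by (simp add: add.commute)
  have agp: "agree n ((selmer n ^^ p) y) y"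
    unfolding agree_def Spy using per unfolding y_def by simp
  have agL: "agree n ((selmer n ^^ L) y) y"
    unfolding L_def using agree_per[OF n1 agp, of L0] by (simp add: mult.commute)
  define P where "P = (\<lambda>i j. betas n y L $$ (i,j))"
  have Ppos: "\<forall>i\<le>n. \<forall>j\<le>n. 0 < P i j"
    unfolding P_def using reach_pos[OF n1 dig1] reach_all[OF n1] LL0 unfolding L0_def by blast
  obtain c C where cpos: "0 < c" and cC: "\<forall>i\<le>n. \<forall>j\<le>n. c \<le> P i j \<and> P i j \<le> C"
    using finite_bounds[OF Ppos] by blast
  define w where "w = vv y"
  have wb: "\<forall>j\<le>n. y n \<le> w j \<and> w j \<le> 1"
  proof (intro allI impI)
    fix j assume j: "j \<le> n"
    show "y n \<le> w j \<and> w j \<le> 1"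
    proof (cases "j = 0")
      case True then show ?thesis using inB_le[OF yB0, of n] n1 by (simp add: w_def vv_def)
    next
      case False then show ?thesis using inB_le[OF yB0, of j] j by (simp add: w_def vv_def)
    qed
  qed
  have wpos: "\<forall>j\<le>n. 0 < w j" using wb yn by (meson order_less_le_trans)
  obtain c1 where c1: "c1 > 0" "\<forall>i\<le>n. vv y i = c1 * (\<Sum>j\<le>n. betas n y L $$ (i,j) * vv ((selmer n ^^ L) y) j)"
    using eigen[OF n1 yB0 ypos, of L] by blast
  have eigP: "\<forall>i\<le>n. (\<Sum>j\<le>n. P i j * w j) = (1 / c1) * w i"
  proof (intro allI impI)
    fix i assume i: "i \<le> n"
    have "(\<Sum>j\<le>n. P i j * w j) = (\<Sum>j\<le>n. betas n y L $$ (i,j) * vv ((selmer n ^^ L) y) j)"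
      unfolding P_def w_def by (intro sum.cong refl) (use vv_agree[OF agL] in simp)
    then show "(\<Sum>j\<le>n. P i j * w j) = (1 / c1) * w i" using c1 i unfolding w_def by simp
  qed
  define A where "A = (\<lambda>i j. betas n x m $$ (i,j))"
  have A0: "\<forall>i\<le>n. \<forall>j\<le>n. 0 \<le> A i j" unfolding A_def by (simp add: betas_nonneg)
  obtain c2 where c2: "c2 > 0" "\<forall>i\<le>n. vv x i = c2 * (\<Sum>j\<le>n. A i j * w j)"
    using eigen[OF n1 xB xpos, of m] unfolding A_def w_def y_def by blast
  have xi: "0 < x i \<and> x i \<le> 1" if i: "i \<in> {1..n}" for i
    using inB_le[OF xB, of i] i xpos[rule_format, of 0] by force
  show ?thesis
  proof -
    have main: "(\<lambda>s. betas n x s $$ (i, g) / betas n x s $$ (0, g)) \<longlonglongrightarrow> x i"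
      if g: "g \<le> n" and i: "i \<in> {1..n}" for g i
    proof -
      define col where "col = (\<lambda>s' i. betas n y s' $$ (i,g))"
      have colA: "betas n x (m + s') $$ (k, g) = mv n A (col s') k" if k: "k \<le> n" for s' k
      proof -
        have "betas n x (m + s') $$ (k, g) = (betas n x m * betas n y s') $$ (k,g)"
          unfolding y_def by (simp only: betas_add)
        also have "\<dots> = (\<Sum>l\<le>n. betas n x m $$ (k,l) * betas n y s' $$ (l,g))"
          by (rule mult_entry[OF betas_carrier betas_carrier k g])
        finally show ?thesis unfolding mv_def A_def col_def .
      qed
      have colP: "col (L + s') k = mv n P (col s') k" if k: "k \<le> n" for s' k
      proof -
        have "betas n y (L + s') = betas n y L * betas n y s'"
          using betas_add[of n y L s'] betas_agree[OF n1 agL] by simp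
        then have "col (L + s') k = (betas n y L * betas n y s') $$ (k,g)" unfolding col_def by simp
        also have "\<dots> = (\<Sum>l\<le>n. betas n y L $$ (k,l) * betas n y s' $$ (l,g))"
          by (rule mult_entry[OF betas_carrier betas_carrier k g])
        finally show ?thesis unfolding mv_def P_def col_def .
      qed
      have colit: "\<forall>k\<le>n. col (t * L + r) k = (mv n P ^^ t) (col r) k" for t r
      proof (induction t)
        case 0 then show ?case by simp
      next
        case (Suc t)
        show ?case
        proof (intro allI impI)
          fix k assume k: "k \<le> n"
          have "col (Suc t * L + r) k = col (L + (t * L + r)) k" by (simp add: add.assoc)
          also have "\<dots> = mv n P (col (t * L + r)) k" by (rule colP[OF k])
          also have "\<dots> = mv n P ((mv n P ^^ t) (col r)) k"
            using Suc by (intro mv_cong) simp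
          finally show "col (Suc t * L + r) k = (mv n P ^^ Suc t) (col r) k" by simp
        qed
      qed
      define K where "K = C / (c * y n)"
      define th where "th = 1 - c / (1 / c1)"
      have bound: "\<bar>betas n x (m + (Suc t * L + r)) $$ (i, g) / betas n x (m + (Suc t * L + r)) $$ (0, g) - x i\<bar>
                    \<le> th ^ t * K" for t r
      proof -
        have v0: "\<forall>j\<le>n. 0 \<le> col r j" unfolding col_def using g by (simp add: betas_nonneg)
        obtain k where k: "k \<le> n" "0 < col r k" using betas_col_pos[OF g, of y r] unfolding col_def by blast
        have vs: "0 < (\<Sum>j\<le>n. col r j)" by (rule sum_pos2[of _ k]) (use k v0 in auto)
        obtain a b where gab: "good n w (mv n P (col r)) a b" and rab: "(b - a) / a \<le> K"
          using contract_init[OF wb yn cpos cC v0 vs] unfolding K_def by blast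
        obtain a' b' where gab': "good n w ((mv n P ^^ t) (mv n P (col r))) a' b'"
          and rab': "(b' - a') / a' \<le> th ^ t * ((b - a) / a)"
          using contract_iter[OF wpos cpos _ eigP gab, of t] cC unfolding th_def by blast
        define U where "U = (mv n P ^^ t) (mv n P (col r))"
        have eqU: "\<forall>k\<le>n. col (Suc t * L + r) k = U k"
          using colit[of "Suc t" r] unfolding U_def by (simp add: funpow_swap1)
        have mvU: "mv n A (col (Suc t * L + r)) k = mv n A U k" for k
          using eqU by (intro mv_cong) simp
        have eigA: "\<forall>k\<le>n. vv x k = c2 * (\<Sum>j\<le>n. A k j * w j)" using c2 by blast
        have ii: "i \<le> n" using i by simp
        have zi: "0 < vv x i" "vv x i \<le> 1" using xi[OF i] i by (auto simp: vv_def)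
        have fin: "\<bar>mv n A U i / mv n A U 0 - vv x i\<bar> \<le> (b' - a') / a'"
          by (rule contract_final[OF A0 eigA c2(1) _ _ ii zi]) (use gab' U_def in \<open>auto simp: vv_def\<close>)
        have th0: "0 \<le> th"
          using lam_ge_c[OF wpos cpos _ eigP] cC cpos c1 unfolding th_def by (simp add: field_simps)
        have "(b' - a') / a' \<le> th ^ t * K" using rab' rab th0
          by (meson mult_left_mono order_trans zero_le_power)
        moreover have "vv x i = x i" using i by (simp add: vv_def)
        ultimately show ?thesis using fin colA[OF ii] colA[of 0] mvU by simp
      qed
      have th0: "0 \<le> th"
        using lam_ge_c[OF wpos cpos _ eigP] cC cpos c1 unfolding th_def by (simp add: field_simps)
      have th1: "th < 1" unfolding th_def using cpos c1 by simp
      have Kpos: "0 < K" unfolding K_def using cpos yn cC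
        by (smt (verit) divide_pos_pos mult_pos_pos le0)
      show ?thesis
      proof (rule LIMSEQ_I)
        fix e :: real assume e: "0 < e"
        have "(\<lambda>t. th ^ t) \<longlonglongrightarrow> 0" by (rule LIMSEQ_power_zero) (use th0 th1 in simp)
        moreover have "0 < e / K" using e Kpos by simp
        ultimately have "\<exists>no. \<forall>t\<ge>no. norm (th ^ t - 0) < e / K" by (rule LIMSEQ_D)
        then obtain T where T: "\<forall>t\<ge>T. norm (th ^ t - 0) < e / K" by blast
        have TT: "th ^ T * K < e" using T[rule_format, of T] Kpos th0 by (simp add: field_simps)
        show "\<exists>no. \<forall>s\<ge>no. norm (betas n x s $$ (i, g) / betas n x s $$ (0, g) - x i) < e"
        proof (intro exI allI impI)
          fix s assume s: "s \<ge> m + Suc T * L"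
          define q where "q = s - m"
          define t where "t = q div L - 1"
          define r where "r = q mod L"
          have "Suc T * L \<le> q" unfolding q_def using s by simp
          then have "Suc T * L div L \<le> q div L" by (rule div_le_mono)
          then have qd: "Suc T \<le> q div L" using L1 by simp
          have st: "Suc t = q div L" unfolding t_def using qd by simp
          have "q = Suc t * L + r" unfolding r_def st using div_mult_mod_eq[of q L] by simp
          then have sq: "s = m + (Suc t * L + r)" unfolding q_def using s by simp
          have tT: "T \<le> t" unfolding t_def using qd by simp
          have "th ^ t \<le> th ^ T" by (rule power_decreasing[OF tT th0]) (use th1 in simp)
          then have "th ^ t * K \<le> th ^ T * K" using Kpos by simp
          then show "norm (betas n x s $$ (i, g) / betas n x s $$ (0, g) - x i) < e"
            using bound[of t r] TT unfolding sq real_norm_def by linarith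
        qed
      qed
    qed
    show ?thesis using main n1 by simp
  qed
qed

end
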